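(* Let $p>5$ be a prime, $q=p^h$, and let $\mathcal{F}$ be the projective closure of $ax^n+by^m=1$ over $\mathbb{F}_q$, with $a,b\in\mathbb{F}_q^*$ and $m,n$ positive integers with $n\ge m>2$. If $p\mid(n+1)$ and $p\mid(m-1)$, then $\mathcal{F}$ is $\mathbb{F}_q$-Frobenius classical with respect to conics.
   Context: With $\varphi_0,\dots,\varphi_5$ the monomials of degree 2 in $x,y,1$, $\tau$ separating and $D^{(k)}_\tau$ Hasse derivatives, the $\mathbb{F}_q$-Frobenius order sequence w.r.t. conics is the lexicographically smallest $\nu_0<\dots<\nu_4$ such that the $6\times6$ determinant with first row $(\varphi_j^q)_j$ and rows $(D^{(\nu_i)}_\tau\varphi_j)_j$ is nonzero; the curve is $\mathbb{F}_q$-Frobenius classical w.r.t. conics if $\nu_i=i$ for all $i$. *)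

theory Defs
  imports Main "Jordan_Normal_Form.Determinant"
begin

text \<open>A family D of Hasse derivatives (an iterative higher derivation) on the field 'k,
  taken with respect to the separating element t, and linear over the constant field F_q
  (the elements c with c^q = c).\<close>
definition hasse_derivation ::
  "nat \<Rightarrow> (nat \<Rightarrow> 'k::field \<Rightarrow> 'k) \<Rightarrow> 'k \<Rightarrow> bool" where
  "hasse_derivation q D t \<longleftrightarrow>
     (\<forall>f. D 0 f = f) \<and>
     (\<forall>k f g. D k (f + g) = D k f + D k g) \<and>
     (\<forall>k f g. D k (f * g) = (\<Sum>i\<le>k. D i f * D (k - i) g)) \<and>
     (\<forall>i j f. D i (D j f) = of_nat ((i + j) choose i) * D (i + j) f) \<and>
     (\<forall>k c. 1 \<le> k \<and> c ^ q = c \<longrightarrow> D k c = 0) \<and>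
     D 1 t = 1 \<and> (\<forall>k. 2 \<le> k \<longrightarrow> D k t = 0)"

definition conic_monomials :: "'k::field \<Rightarrow> 'k \<Rightarrow> 'k list" where
  "conic_monomials x y = [1, x, y, x^2, x * y, y^2]"

definition frob_conic_matrix ::
  "nat \<Rightarrow> (nat \<Rightarrow> 'k::field \<Rightarrow> 'k) \<Rightarrow> 'k \<Rightarrow> 'k \<Rightarrow> nat list \<Rightarrow> 'k mat" where
  "frob_conic_matrix q D x y \<nu> =
     mat 6 6 (\<lambda>(i, j). if i = 0 then (conic_monomials x y ! j) ^ q
                       else D (\<nu> ! (i - 1)) (conic_monomials x y ! j))"

definition admissible_conic_seq :: "nat \<Rightarrow> (nat \<Rightarrow> 'k::field \<Rightarrow> 'k) \<Rightarrow> 'k \<Rightarrow> 'k \<Rightarrow> nat list \<Rightarrow> bool" where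
  "admissible_conic_seq q D x y \<nu> \<longleftrightarrow>
     length \<nu> = 5 \<and> sorted_wrt (<) \<nu> \<and> det (frob_conic_matrix q D x y \<nu>) \<noteq> 0"

definition lex_le :: "nat list \<Rightarrow> nat list \<Rightarrow> bool" where
  "lex_le u v \<longleftrightarrow> u = v \<or> (u, v) \<in> lexord {(a, b). a < b}"

definition frob_conic_order_seq :: "nat \<Rightarrow> (nat \<Rightarrow> 'k::field \<Rightarrow> 'k) \<Rightarrow> 'k \<Rightarrow> 'k \<Rightarrow> nat list \<Rightarrow> bool" where
  "frob_conic_order_seq q D x y \<nu> \<longleftrightarrow>
     admissible_conic_seq q D x y \<nu> \<and>
     (\<forall>\<mu>. admissible_conic_seq q D x y \<mu> \<longrightarrow> lex_le \<nu> \<mu>)"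

definition frobenius_classical_conics :: "nat \<Rightarrow> (nat \<Rightarrow> 'k::field \<Rightarrow> 'k) \<Rightarrow> 'k \<Rightarrow> 'k \<Rightarrow> bool" where
  "frobenius_classical_conics q D x y \<longleftrightarrow> frob_conic_order_seq q D x y [0, 1, 2, 3, 4]"

end

theory Submission imports Defs "HOL-Computational_Algebra.Polynomial" "HOL-Computational_Algebra.Primes"
begin

definition is_der :: "('k::field \<Rightarrow> 'k) \<Rightarrow> bool" where
  "is_der d \<longleftrightarrow> (\<forall>f g. d (f + g) = d f + d g) \<and> (\<forall>f g. d (f * g) = f * d g + d f * g)"

lemma der_add: "is_der d \<Longrightarrow> d (f + g) = d f + d g"
  unfolding is_der_def by blast

lemma der_mult: "is_der d \<Longrightarrow> d (f * g) = f * d g + d f * g"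
  unfolding is_der_def by blast

lemma der_0: "is_der d \<Longrightarrow> d 0 = 0"
  using der_add[of d 0 0] by (metis add_cancel_right_right)

lemma der_1: "is_der d \<Longrightarrow> d 1 = 0"
  using der_mult[of d 1 1] by (metis add_cancel_right_right mult_1 mult_1_right)

lemma der_minus: "is_der d \<Longrightarrow> d (- f) = - d f"
  using der_add[of d f "-f"] der_0[of d] by (simp add: eq_neg_iff_add_eq_0 add.commute)

lemma der_diff: "is_der d \<Longrightarrow> d (f - g) = d f - d g"
  using der_add[of d f "-g"] der_minus[of d g] by simp

lemma der_power: "is_der d \<Longrightarrow> d (f ^ N) = of_nat N * f ^ (N - 1) * d f"
proof (induction N)
  case 0 then show ?case by (simp add: der_1)
next
  case (Suc N)
  have "d (f ^ Suc N) = f * d (f ^ N) + d f * f ^ N" using der_mult[OF Suc.prems] by simp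
  also have "\<dots> = of_nat (Suc N) * f ^ N * d f"
    using Suc by (cases N) (auto simp: algebra_simps)
  finally show ?case by simp
qed

lemma der_inverse: "is_der d \<Longrightarrow> f \<noteq> 0 \<Longrightarrow> d (inverse f) = - d f * (inverse f)^2"
proof -
  assume d: "is_der d" and f: "f \<noteq> 0"
  have "0 = d (f * inverse f)" using f der_1[OF d] by simp
  also have "\<dots> = f * d (inverse f) + d f * inverse f" using der_mult[OF d] by simp
  finally have "f * d (inverse f) = - d f * inverse f" by (simp add: eq_neg_iff_add_eq_0)
  then have "inverse f * (f * d (inverse f)) = inverse f * (- d f * inverse f)" by simp
  then show ?thesis using f by (simp add: power2_eq_square field_simps)
qed

lemma der_sum: "is_der d \<Longrightarrow> d (sum g A) = (\<Sum>a\<in>A. d (g a))"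
  by (induction A rule: infinite_finite_induct) (auto simp: der_0 der_add)

lemma der_pth: "is_der d \<Longrightarrow> CHAR('k::field) = p \<Longrightarrow> d ((f::'k) ^ (p * s)) = 0"
proof -
  assume d: "is_der d" and c: "CHAR('k) = p"
  have "d ((f ^ s) ^ p) = of_nat p * (f^s) ^ (p - 1) * d (f^s)" by (rule der_power[OF d])
  also have "of_nat p = (0::'k)" by (metis c of_nat_CHAR)
  finally show ?thesis by (simp add: power_mult[symmetric] mult.commute)
qed

lemma hd_der: "hasse_derivation q D t \<Longrightarrow> is_der (D 1)"
  unfolding hasse_derivation_def is_der_def
  by (auto simp: atMost_Suc algebra_simps)

lemma hd_iter1: "hasse_derivation q D t \<Longrightarrow> D 1 (D j f) = of_nat (Suc j) * D (Suc j) f"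
  unfolding hasse_derivation_def by (metis One_nat_def choose_one plus_1_eq_Suc)

lemma hd_const: "hasse_derivation q D t \<Longrightarrow> 1 \<le> k \<Longrightarrow> c ^ q = c \<Longrightarrow> D k c = 0"
  unfolding hasse_derivation_def by blast

lemma hd_t: "hasse_derivation q D t \<Longrightarrow> D 1 t = 1"
  unfolding hasse_derivation_def by blast

lemma hd_t2: "hasse_derivation q D t \<Longrightarrow> 2 \<le> k \<Longrightarrow> D k t = 0"
  unfolding hasse_derivation_def by blast

lemma hd_0: "hasse_derivation q D t \<Longrightarrow> D 0 f = f"
  unfolding hasse_derivation_def by blast

lemma frob_add: "prime CHAR('k::field) \<Longrightarrow> q = CHAR('k) ^ h \<Longrightarrow> ((u::'k) + v) ^ q = u ^ q + v ^ q"
  by (rule freshmans_dream')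

lemma frob_diff: "prime CHAR('k::field) \<Longrightarrow> q = CHAR('k) ^ h \<Longrightarrow> ((u::'k) - v) ^ q = u ^ q - v ^ q"
  using frob_add[of q h "u - v" v] by (simp add: eq_diff_eq)

lemma frob_sum: "prime CHAR('k::field) \<Longrightarrow> q = CHAR('k) ^ h \<Longrightarrow> (sum (g::_\<Rightarrow>'k) A) ^ q = (\<Sum>a\<in>A. g a ^ q)"
  by (rule freshmans_dream_sum')

lemma frob_of_nat: "prime CHAR('k::field) \<Longrightarrow> q = CHAR('k) ^ h \<Longrightarrow> (of_nat N :: 'k) ^ q = of_nat N"
proof (induction N)
  case 0
  have "q > 0" using 0 by (simp add: prime_gt_0_nat)
  then show ?case by simp
next
  case (Suc N)
  then show ?case using frob_add[OF Suc.prems, of "of_nat N" 1] by (simp add: add.commute)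
qed

definition inC :: "nat \<Rightarrow> 'k::field poly \<Rightarrow> bool" where
  "inC q g \<longleftrightarrow> (\<forall>i. coeff g i ^ q = coeff g i)"

lemma inC_1: "0 < q \<Longrightarrow> inC q (1::'k::field poly)"
  unfolding inC_def by (auto simp: coeff_1)

lemma inC_monom: "0 < q \<Longrightarrow> (c::'k::field) ^ q = c \<Longrightarrow> inC q (monom c n)"
  unfolding inC_def by (auto simp: coeff_monom)

lemma inC_diff: "prime CHAR('k::field) \<Longrightarrow> q = CHAR('k) ^ h \<Longrightarrow> inC q f \<Longrightarrow> inC q g \<Longrightarrow> inC q ((f::'k poly) - g)"
  unfolding inC_def by (simp add: frob_diff)

lemma inC_mult: "prime CHAR('k::field) \<Longrightarrow> q = CHAR('k) ^ h \<Longrightarrow> inC q f \<Longrightarrow> inC q g \<Longrightarrow> inC q ((f::'k poly) * g)"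
  unfolding inC_def coeff_mult by (simp add: frob_sum power_mult_distrib)

lemma inC_power: "prime CHAR('k::field) \<Longrightarrow> q = CHAR('k) ^ h \<Longrightarrow> inC q f \<Longrightarrow> inC q ((f::'k poly) ^ N)"
proof (induction N)
  case 0
  have "q > 0" using 0 by (simp add: prime_gt_0_nat)
  then show ?case by (simp add: inC_1)
next
  case (Suc N)
  then show ?case using inC_mult[OF Suc.prems(1,2)] by simp
qed

lemma der_poly: "is_der d \<Longrightarrow> (\<forall>i. d (coeff g i) = 0) \<Longrightarrow> d x = 1 \<Longrightarrow> d (poly g x) = poly (pderiv g) x"
proof (induction g)
  case 0
  then show ?case by (simp add: der_0)
next
  case (pCons a g)
  have ca: "d a = 0" using pCons.prems(2)[rule_format, of 0] by simp
  have cg: "\<forall>i. d (coeff g i) = 0" using pCons.prems(2) by (metis coeff_pCons_Suc)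
  have IH: "d (poly g x) = poly (pderiv g) x" using pCons.IH[OF pCons.prems(1) cg pCons.prems(3)] .
  have "d (poly (pCons a g) x) = d a + (x * d (poly g x) + d x * poly g x)"
    by (simp add: der_add[OF pCons.prems(1)] der_mult[OF pCons.prems(1)])
  also have "\<dots> = poly (pderiv (pCons a g)) x"
    using ca IH pCons.prems(3) by (simp add: pderiv_pCons algebra_simps)
  finally show ?case .
qed

lemma transc:
  assumes d: "is_der d" and pr: "prime p" and ch: "CHAR('k::field) = p" and h: "h \<ge> 1" and qd: "q = p^h"
    and dc: "\<And>c::'k. c^q = c \<Longrightarrow> d c = 0" and dx: "d x = 1"
  shows "inC q g \<Longrightarrow> poly g x = 0 \<Longrightarrow> g = 0"
proof (induction "degree g" arbitrary: g rule: less_induct)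
  case less
  have prc: "prime CHAR('k)" and qc: "q = CHAR('k) ^ h" using pr ch qd by auto
  have p1: "p > 1" using pr prime_gt_1_nat by blast
  show ?case
  proof (rule ccontr)
    assume g0: "g \<noteq> 0"
    have pos: "degree g > 0"
    proof (rule ccontr)
      assume "\<not> 0 < degree g"
      then have dg0: "degree g = 0" by simp
      then have "poly g x = coeff g 0" by (simp add: poly_altdef)
      moreover have "coeff g 0 \<noteq> 0" using g0 dg0 leading_coeff_0_iff by metis
      ultimately show False using less.prems by simp
    qed
    have inCd: "inC q (pderiv g)"
      using less.prems(1) frob_of_nat[OF prc qc] unfolding inC_def coeff_pderiv
      by (simp add: power_mult_distrib del: of_nat_Suc)
    have "poly (pderiv g) x = d (poly g x)"
      using der_poly[OF d _ dx, of g] dc less.prems(1) unfolding inC_def by simp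
    also have "\<dots> = 0" using less.prems(2) der_0[OF d] by simp
    moreover have "degree (pderiv g) < degree g"
    proof -
      have "degree (pderiv g) \<le> degree g - 1"
        by (rule degree_le) (auto simp: coeff_pderiv coeff_eq_0)
      then show ?thesis using pos by simp
    qed
    ultimately have pd0: "pderiv g = 0" using less.hyps[of "pderiv g"] inCd by simp
    have cz: "coeff g i = 0" if "\<not> p dvd i" for i
    proof (cases i)
      case 0 then show ?thesis using that by simp
    next
      case (Suc j)
      have "of_nat (Suc j) * coeff g (Suc j) = 0" using pd0 coeff_pderiv[of g j] by simp
      moreover have "of_nat (Suc j) \<noteq> (0::'k)" using that Suc ch of_nat_eq_0_iff_char_dvd[where 'a='k, of "Suc j"] by metis
      ultimately show ?thesis using Suc by simp
    qed
    define N where "N = degree g div p"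
    define q' where "q' = p^(h-1)"
    have qq: "q' * p = q" using h qd unfolding q'_def by (metis Suc_diff_le diff_Suc_1 power_Suc2)
    define g2 where "g2 = (\<Sum>j\<le>N. monom (coeff g (p*j) ^ q') j)"
    have c2: "coeff g2 i = (if i \<le> N then coeff g (p*i) ^ q' else 0)" for i
      unfolding g2_def coeff_sum coeff_monom by (simp add: sum.delta)
    have "lead_coeff g \<noteq> 0" using g0 by simp
    then have "p dvd degree g" using cz by (metis)
    then have dg: "degree g = p * N" unfolding N_def by simp
    have Npos: "N > 0" using pos dg by (cases N) auto
    have g20: "g2 \<noteq> 0"
    proof
      assume "g2 = 0"
      then have "coeff g2 N = 0" by simp
      then have "coeff g (p*N) ^ q' = 0" using c2 by simp
      then have "lead_coeff g = 0" using dg by simp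
      then show False using g0 by simp
    qed
    have "degree g2 \<le> N" unfolding g2_def
      by (rule degree_sum_le) (auto intro: order.trans[OF degree_monom_le])
    also have "N < degree g" using dg Npos p1 by simp
    finally have dlt: "degree g2 < degree g" .
    have inC2: "inC q g2"
      unfolding inC_def c2
    proof
      fix i
      have "(coeff g (p*i) ^ q') ^ q = (coeff g (p*i) ^ q) ^ q'"
        by (simp add: power_mult[symmetric] mult.commute)
      also have "\<dots> = coeff g (p*i) ^ q'" using less.prems(1) unfolding inC_def by simp
      finally show "(if i \<le> N then coeff g (p * i) ^ q' else 0) ^ q = (if i \<le> N then coeff g (p * i) ^ q' else 0)"
        using qq p1 qd by (auto simp: power_0_left)
    qed
    have "poly g2 x ^ p = (\<Sum>j\<le>N. coeff g (p*j) ^ q' * x ^ j) ^ p"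
      unfolding g2_def poly_sum poly_monom by simp
    also have "\<dots> = (\<Sum>j\<le>N. (coeff g (p*j) ^ q' * x ^ j) ^ p)"
      using frob_sum[OF prc, of p 1] ch by simp
    also have "\<dots> = (\<Sum>j\<le>N. coeff g (p*j) * x ^ (p*j))"
    proof (rule sum.cong)
      fix j
      have "(coeff g (p*j) ^ q' * x ^ j) ^ p = coeff g (p*j) ^ (q' * p) * x ^ (j * p)"
        by (simp add: power_mult_distrib power_mult)
      also have "\<dots> = coeff g (p*j) * x ^ (p*j)"
        using less.prems(1) qq unfolding inC_def by (simp add: mult.commute)
      finally show "(coeff g (p*j) ^ q' * x ^ j) ^ p = coeff g (p*j) * x ^ (p*j)" .
    qed simp
    also have "\<dots> = (\<Sum>i\<in>(\<lambda>j. p*j) ` {..N}. coeff g i * x ^ i)"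
    proof -
      have inj: "inj_on (\<lambda>j. p*j) {..N}" using p1 by (simp add: inj_on_def)
      show ?thesis using sum.reindex[OF inj, of "\<lambda>i. coeff g i * x ^ i"] by simp
    qed
    also have "\<dots> = (\<Sum>i\<le>degree g. coeff g i * x ^ i)"
    proof (rule sum.mono_neutral_left)
      show "(\<lambda>j. p*j) ` {..N} \<subseteq> {..degree g}" using dg by auto
      show "\<forall>i\<in>{..degree g} - (\<lambda>j. p*j) ` {..N}. coeff g i * x ^ i = 0"
      proof
        fix i assume i: "i \<in> {..degree g} - (\<lambda>j. p*j) ` {..N}"
        have "\<not> p dvd i"
        proof
          assume "p dvd i"
          then obtain j where "i = p * j" by blast
          moreover have "j \<le> N" using i `i = p*j` dg p1 by auto
          ultimately show False using i by auto
        qed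
        then show "coeff g i * x ^ i = 0" using cz by simp
      qed
    qed simp
    also have "\<dots> = poly g x" by (simp add: poly_altdef)
    also have "\<dots> = 0" by (rule less.prems(2))
    finally have "poly g2 x = 0" by simp
    then have "g2 = 0" using less.hyps[OF dlt inC2] by simp
    then show False using g20 by simp
  qed
qed


locale fsetup =
  fixes p h q n m :: nat and a b x y :: "'k::field" and D :: "nat \<Rightarrow> 'k \<Rightarrow> 'k"
  assumes pr: "prime p" and p5: "p > 5" and h1: "h \<ge> 1" and qd: "q = p ^ h"
    and ch: "CHAR('k) = p"
    and aq: "a ^ q = a" and a0: "a \<noteq> 0" and bq: "b ^ q = b" and b0: "b \<noteq> 0"
    and m2: "m > 2" and nm: "n \<ge> m"
    and E: "a * x ^ n + b * y ^ m = 1"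
    and hd: "hasse_derivation q D x"
    and pn: "p dvd (n + 1)" and pm: "p dvd (m - 1)"
begin

definition d :: "'k \<Rightarrow> 'k" where "d = D 1"

lemma der: "is_der d" unfolding d_def using hd_der[OF hd] .
lemma dx: "d x = 1" unfolding d_def using hd_t[OF hd] .
lemma dconst: "c ^ q = c \<Longrightarrow> d c = 0" unfolding d_def using hd_const[OF hd, of 1 c] by simp
lemma prc: "prime CHAR('k)" using pr ch by simp
lemma qc: "q = CHAR('k) ^ h" using qd ch by simp
lemma qpos: "q > 0" using qd pr prime_gt_0_nat by simp
lemma q1: "q > 1"
proof -
  have "1 < p" using pr prime_gt_1_nat by blast
  then show ?thesis unfolding qd using h1 by (intro one_less_power) auto
qed

lemma frob_neg: "(- (z::'k)) ^ q = - (z ^ q)"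
  using frob_diff[OF prc qc, of 0 z] qpos by simp

lemma x0: "x \<noteq> 0"
  using dx der_0[OF der] by auto

lemma nat_nz: "\<not> p dvd k \<Longrightarrow> (of_nat k :: 'k) \<noteq> 0"
  using ch of_nat_eq_0_iff_char_dvd by metis

lemma n_nz: "(of_nat n :: 'k) \<noteq> 0"
proof (rule nat_nz)
  show "\<not> p dvd n"
  proof
    assume "p dvd n"
    then have "p dvd 1" using pn by (metis dvd_add_right_iff)
    then show False using pr by simp
  qed
qed

definition "u = x ^ (n + 1)"
definition "v = y ^ (m - 1)"

lemma du: "d u = 0"
proof -
  obtain s where "n + 1 = p * s" using pn by blast
  then show ?thesis unfolding u_def using der_pth[OF der ch] by simp
qed

lemma dv: "d v = 0"
proof -
  obtain s where "m - 1 = p * s" using pm by blast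
  then show ?thesis unfolding v_def using der_pth[OF der ch] by simp
qed

lemma da: "d a = 0" using dconst aq by simp
lemma db: "d b = 0" using dconst bq by simp

lemma y0: "y \<noteq> 0"
proof
  assume "y = 0"
  then have e: "a * x ^ n = 1" using E m2 by (simp add: power_0_left)
  have "d (a * x ^ n) = a * (of_nat n * x ^ (n - 1) * 1)"
    by (simp add: der_mult[OF der] der_power[OF der] da dx)
  also have "d (a * x ^ n) = 0" using e der_1[OF der] by simp
  finally show False using a0 n_nz x0 by simp
qed

lemma v0: "v \<noteq> 0" unfolding v_def using y0 by simp
lemma u0: "u \<noteq> 0" unfolding u_def using x0 by simp

definition "c0 = inverse (b * v)"
definition "c1 = - (a * u) * inverse (b * v)"

lemma dbv: "d (b * v) = 0" by (simp add: der_mult[OF der] db dv)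

lemma dc0: "d c0 = 0"
proof -
  have "d (inverse (b*v)) = - d (b*v) * (inverse (b*v))^2" by (rule der_inverse[OF der]) (simp add: b0 v0)
  then show ?thesis unfolding c0_def dbv by simp
qed

lemma dc1: "d c1 = 0"
proof -
  have "d (-(a*u) * inverse (b*v)) = -(a*u) * d (inverse (b*v)) + d (-(a*u)) * inverse (b*v)"
    by (rule der_mult[OF der])
  moreover have "d (inverse (b*v)) = 0" using dc0 unfolding c0_def .
  moreover have "d (-(a*u)) = 0" by (simp add: der_minus[OF der] der_mult[OF der] da du)
  ultimately show ?thesis unfolding c1_def by simp
qed

lemma c1nz: "c1 \<noteq> 0" unfolding c1_def using a0 u0 b0 v0 by simp

lemma vy: "v * y = y ^ m" unfolding v_def using m2
  by (metis Suc_diff_1 bot_nat_0.not_eq_extremum less_nat_zero_code power_Suc2)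

lemma bvxy: "b * v * x * y = x - a * u"
proof -
  have "b * v * x * y = x * (b * y ^ m)" using vy by (simp add: algebra_simps)
  also have "\<dots> = x * (1 - a * x ^ n)" using E by (simp add: eq_diff_eq add.commute)
  also have "\<dots> = x - a * u" unfolding u_def by (simp add: algebra_simps)
  finally show ?thesis .
qed

lemma xy: "x * y = c0 * x + c1"
proof -
  have "x * y = (b * v * x * y) * inverse (b * v)" using b0 v0 by (simp add: field_simps)
  then show ?thesis unfolding c0_def c1_def bvxy by (simp add: algebra_simps)
qed

definition "dd = x ^ q * y ^ q - c0 * x ^ q - c1"

lemma key_rel:
  assumes "dd = 0"
  shows "(1 - a * x ^ n) ^ (m + q - 1) * x ^ (q * m) = (x ^ q - a * x ^ (n + 1)) ^ m"
proof -
  have bvq: "(b * v) ^ q = b * v ^ q" using bq by (simp add: power_mult_distrib)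
  have vq0: "v ^ q \<noteq> 0" using v0 by simp
  have "(x * y) ^ q = c0 ^ q * x ^ q + c1 ^ q"
    unfolding xy using frob_add[OF prc qc] by (simp add: power_mult_distrib)
  moreover have "c0 ^ q = inverse (b * v ^ q)" unfolding c0_def power_inverse bvq ..
  moreover have "c1 ^ q = - (a * u ^ q) * inverse (b * v ^ q)"
    unfolding c1_def power_mult_distrib[of "-(a*u)"] power_inverse bvq frob_neg
    by (simp add: power_mult_distrib aq)
  moreover have "(x * y) ^ q = c0 * x ^ q + c1" using assms unfolding dd_def
    by (simp add: power_mult_distrib algebra_simps)
  ultimately have eq1: "inverse (b * v ^ q) * x ^ q - (a * u ^ q) * inverse (b * v ^ q)
      = inverse (b * v) * x ^ q - (a * u) * inverse (b * v)"
    unfolding c0_def c1_def by (simp add: algebra_simps)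
  have fr: "x ^ q - a * u ^ q = b * v ^ q * x ^ q * y ^ q"
  proof -
    have "(x - a * u) ^ q = x ^ q - a * u ^ q"
      using frob_diff[OF prc qc] aq by (simp add: power_mult_distrib)
    moreover have "(b * v * x * y) ^ q = b * v ^ q * x ^ q * y ^ q"
      using bq by (simp add: power_mult_distrib)
    ultimately show ?thesis using bvxy by simp
  qed
  have l1: "(inverse (b * v ^ q) * x ^ q - (a * u ^ q) * inverse (b * v ^ q)) * (b*v*v^q) = v * (x^q - a*u^q)"
    using b0 vq0 by (simp add: field_simps)
  have l2: "(inverse (b * v) * x ^ q - (a * u) * inverse (b * v)) * (b*v*v^q) = v^q * (x^q - a*u)"
    using b0 v0 by (simp add: field_simps)
  from eq1 have "(inverse (b * v ^ q) * x ^ q - (a * u ^ q) * inverse (b * v ^ q)) * (b*v*v^q)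
     = (inverse (b * v) * x ^ q - (a * u) * inverse (b * v)) * (b*v*v^q)"
    by (rule arg_cong[where f="\<lambda>t. t * (b*v*v^q)"])
  then have "v * (x ^ q - a * u ^ q) = v ^ q * (x ^ q - a * u)" unfolding l1 l2 .
  then have "v * (b * v ^ q * x ^ q * y ^ q) = v ^ q * (x ^ q - a * u)" using fr by simp
  moreover have "v * (b * v ^ q * x ^ q * y ^ q) = v^q * (b * v * x ^ q * y ^ q)" by (simp add: mult_ac)
  ultimately have "v^q * (b * v * x ^ q * y ^ q) = v ^ q * (x ^ q - a * u)" by simp
  then have ss: "b * v * x ^ q * y ^ q = x ^ q - a * u" using mult_left_cancel[OF vq0] by blast
  have "(x ^ q - a * x ^ (n + 1)) ^ m = (b * v * x ^ q * y ^ q) ^ m" using ss unfolding u_def by simp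
  also have "\<dots> = b ^ m * (v * y ^ q) ^ m * x ^ (q * m)"
    unfolding power_mult by (simp add: power_mult_distrib mult_ac)
  also have "(v * y ^ q) ^ m = (y ^ m) ^ (m + q - 1)"
    unfolding v_def using m2 by (simp add: power_mult[symmetric] power_add[symmetric] algebra_simps)
  also have "y ^ m = (1 - a * x ^ n) * inverse b" using E b0 by (simp add: field_simps)
  also have "b ^ m * ((1 - a * x ^ n) * inverse b) ^ (m + q - 1) * x ^ (q * m)
      = (1 - a * x ^ n) ^ (m + q - 1) * x ^ (q * m) * (b ^ m * inverse (b ^ (m + q - 1)))"
    unfolding power_mult_distrib power_inverse by (simp only: mult_ac)
  also have "b ^ m * inverse (b ^ (m + q - 1)) = 1"
  proof -
    have "b ^ (m + q - 1) = b ^ m * b ^ (q - 1)" using q1 by (simp add: power_add[symmetric])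
    moreover have "b ^ (q - 1) = 1"
    proof -
      have "b ^ (q - 1) * b = b" using bq q1 by (metis Suc_diff_1 power_Suc2 qpos)
      then show ?thesis using b0 by simp
    qed
    ultimately show ?thesis using b0 by simp
  qed
  finally show ?thesis by simp
qed

lemma dd_nz: "dd \<noteq> 0"
proof
  assume dd0: "dd = 0"
  define A where "A = (1::'k poly) - monom a n"
  define B where "B = monom (1::'k) q - monom a (n + 1)"
  define P where "P = A ^ (m + q - 1) * monom 1 (q * m) - B ^ m"
  have "poly P x = 0" using key_rel[OF dd0]
    unfolding P_def A_def B_def by (simp add: poly_monom)
  moreover have "inC q P" unfolding P_def A_def B_def
    using qpos aq
    by (intro inC_diff[OF prc qc] inC_mult[OF prc qc] inC_power[OF prc qc] inC_1 inC_monom) auto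
  ultimately have P0: "P = 0"
    using transc[OF der pr ch h1 qd dconst dx] by blast
  have n1: "n \<ge> 1" using nm m2 by simp
  have dA: "degree A = n"
  proof -
    have "degree (1 + - monom a n) = degree (- monom a n)"
      by (rule degree_add_eq_right) (use n1 a0 in \<open>simp add: degree_monom_eq\<close>)
    then show ?thesis unfolding A_def using a0 by (simp add: degree_monom_eq)
  qed
  have A0: "A \<noteq> 0" using dA n1 by auto
  have d1: "degree (A ^ (m + q - 1) * monom 1 (q * m)) = (m + q - 1) * n + q * m"
    using A0 dA by (simp add: degree_mult_eq degree_power_eq degree_monom_eq)
  have "degree B \<le> max q (n + 1)" unfolding B_def
    by (rule degree_diff_le) (auto intro: order.trans[OF degree_monom_le])
  then have "degree B * m \<le> max q (n + 1) * m" by (rule mult_le_mono1)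
  then have "degree (B ^ m) \<le> max q (n + 1) * m"
    using degree_power_le[of B m] by (rule order.trans[rotated])
  then have d2: "degree (B ^ m) \<le> m * max q (n + 1)" by (simp only: mult.commute)
  have lt: "m * max q (n + 1) < (m + q - 1) * n + q * m"
  proof (cases "q \<ge> n + 1")
    case True
    have "(m + q - 1) * n \<ge> 1" using n1 q1 by simp
    then show ?thesis using True by (simp add: mult.commute)
  next
    case False
    have e1: "max q (n + 1) = n + 1" using False by simp
    have e2: "m * (n + 1) = m * n + m" by simp
    have e3: "m * n \<le> (m + q - 1) * n" using q1 by (intro mult_le_mono1) simp
    have e4: "m < q * m" using q1 m2 by simp
    show ?thesis unfolding e1 e2 using e3 e4 by linarith
  qed
  have "degree P = (m + q - 1) * n + q * m"
    unfolding P_def diff_conv_add_uminus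
    by (subst degree_add_eq_left) (use d1 d2 lt in auto)
  then have "degree P > 0" using q1 m2 by simp
  then show False using P0 by simp
qed

definition "f = inverse x"

lemma f0: "f \<noteq> 0" unfolding f_def using x0 by simp
lemma df: "d f = - (f ^ 2)" unfolding f_def using der_inverse[OF der x0] dx by simp
lemma yf: "y = c0 + c1 * f"
proof -
  have "y = (x * y) * inverse x" using x0 by simp
  then show ?thesis unfolding xy f_def using x0 by (simp add: field_simps)
qed
lemma dy: "d y = - (c1 * f ^ 2)"
  by (subst yf) (simp add: der_add[OF der] der_mult[OF der] dc0 dc1 df)

lemma small_nz: "0 < k \<Longrightarrow> k \<le> 5 \<Longrightarrow> (of_nat k :: 'k) \<noteq> 0"
  using p5 by (intro nat_nz) (auto dest: dvd_imp_le)

lemma two: "(2::'k) \<noteq> 0" using small_nz[of 2] by simp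
lemma three: "(3::'k) \<noteq> 0" using small_nz[of 3] by simp
lemma four: "(4::'k) \<noteq> 0" using small_nz[of 4] by simp

lemma Dsuc: "(of_nat (Suc j) :: 'k) \<noteq> 0 \<Longrightarrow> D (Suc j) g = d (D j g) / of_nat (Suc j)"
  using hd_iter1[OF hd, of j g] unfolding d_def by (simp add: field_simps)

lemma D1: "D 1 g = d g" unfolding d_def ..
lemma D2: "D 2 g = d (d g) / 2"
  using Dsuc[of 1 g, unfolded D1 Suc_1] two by simp
lemma D3: "D 3 g = d (D 2 g) / 3"
  using Dsuc[of 2 g] three by (simp add: numeral_3_eq_3 numeral_2_eq_2)
lemma D4: "D 4 g = d (D 3 g) / 4"
proof -
  have "(4::nat) = Suc 3" by simp
  then show ?thesis using Dsuc[of 3 g] four by (simp only:) simp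
qed

lemma d_numeral: "d (numeral w) = 0"
proof -
  have "(of_nat (numeral w) :: 'k) ^ q = of_nat (numeral w)" by (rule frob_of_nat[OF prc qc])
  then show ?thesis using dconst by simp
qed

lemmas drules = d_numeral der_add[OF der] der_mult[OF der] der_minus[OF der] der_diff[OF der] der_power[OF der]
  df dy dx dc0 dc1 der_1[OF der] der_0[OF der]

lemma Dy: "D 2 y = c1 * f^3" "D 3 y = - (c1 * f^4)" "D 4 y = c1 * f^5"
proof -
  show a: "D 2 y = c1 * f^3" unfolding D2 using two by (simp add: drules field_simps power2_eq_square power3_eq_cube)
  show b: "D 3 y = - (c1 * f^4)" unfolding D3 a using three by (simp add: drules field_simps eval_nat_numeral)
  show "D 4 y = c1 * f^5" unfolding D4 b using four by (simp add: drules field_simps eval_nat_numeral)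
qed

lemma Dx2: "D 1 (x^2) = 2 * x" "D 2 (x^2) = 1" "D 3 (x^2) = 0" "D 4 (x^2) = 0"
proof -
  show a: "D 1 (x^2) = 2 * x" unfolding D1 by (simp add: drules)
  show b: "D 2 (x^2) = 1" unfolding D2 D1[symmetric] a unfolding D1 using two by (simp add: drules)
  show c: "D 3 (x^2) = 0" unfolding D3 b by (simp add: drules)
  show "D 4 (x^2) = 0" unfolding D4 c by (simp add: drules)
qed

lemma Dxy: "D 1 (x*y) = c0" "D 2 (x*y) = 0" "D 3 (x*y) = 0" "D 4 (x*y) = 0"
proof -
  show a: "D 1 (x*y) = c0" unfolding D1 xy by (simp add: drules)
  show b: "D 2 (x*y) = 0" unfolding D2 D1[symmetric] a unfolding D1 by (simp add: drules)
  show c: "D 3 (x*y) = 0" unfolding D3 b by (simp add: drules)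
  show "D 4 (x*y) = 0" unfolding D4 c by (simp add: drules)
qed

lemma Dy2: "D 1 (y^2) = - (2 * c1 * f^2 * y)"
  "D 2 (y^2) = c1 * (2 * f^3 * y + c1 * f^4)"
  "D 3 (y^2) = - (2 * c1 * f^4 * y) - 2 * c1^2 * f^5"
  "D 4 (y^2) = 2 * c1 * f^5 * y + 3 * c1^2 * f^6"
proof -
  show a: "D 1 (y^2) = - (2 * c1 * f^2 * y)" unfolding D1 by (simp add: drules)
  show b: "D 2 (y^2) = c1 * (2 * f^3 * y + c1 * f^4)"
    unfolding D2 D1[symmetric] a unfolding D1 using two by (simp add: drules field_simps eval_nat_numeral)
  show c: "D 3 (y^2) = - (2 * c1 * f^4 * y) - 2 * c1^2 * f^5"
    unfolding D3 b using three by (simp add: drules field_simps eval_nat_numeral)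
  show "D 4 (y^2) = 2 * c1 * f^5 * y + 3 * c1^2 * f^6"
    unfolding D4 c using four by (simp add: drules field_simps eval_nat_numeral)
qed

lemma D1y: "D 1 y = - (c1 * f ^ 2)" unfolding D1 by (rule dy)
lemma D1x: "D 1 x = 1" unfolding D1 by (rule dx)
lemma Dxk: "2 \<le> k \<Longrightarrow> D k x = 0" using hd_t2[OF hd] .
lemma D1k: "1 \<le> k \<Longrightarrow> D k 1 = 0" using hd_const[OF hd] by simp
lemma D0: "D 0 g = g" using hd_0[OF hd] .

lemma sum6: "(\<Sum>j\<in>{0..<6::nat}. g j) = g 0 + g 1 + g 2 + g 3 + g 4 + (g 5 :: 'k)"
  by (simp add: eval_nat_numeral)

lemma det_nz: "det (frob_conic_matrix q D x y [0,1,2,3,4]) \<noteq> 0"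
proof
  let ?M = "frob_conic_matrix q D x y [0,1,2,3,4]"
  assume "det ?M = 0"
  have car: "?M \<in> carrier_mat 6 6" unfolding frob_conic_matrix_def by simp
  obtain w where w: "w \<in> carrier_vec 6" "w \<noteq> 0\<^sub>v 6" "?M *\<^sub>v w = 0\<^sub>v 6"
    using det_0_iff_vec_prod_zero_field[OF car] \<open>det ?M = 0\<close> by blast
  have row: "(\<Sum>j\<in>{0..<6}. ?M $$ (i,j) * w $ j) = 0" if "i < 6" for i
  proof -
    have "(?M *\<^sub>v w) $ i = 0" using w(3) that by simp
    moreover have "(?M *\<^sub>v w) $ i = row ?M i \<bullet> w" using car that by simp
    moreover have "row ?M i \<bullet> w = (\<Sum>j\<in>{0..<6}. ?M $$ (i,j) * w $ j)"
      unfolding scalar_prod_def using w(1) car that by (intro sum.cong) auto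
    ultimately show ?thesis by simp
  qed
  have ent: "?M $$ (i,j) = (if i = 0 then (conic_monomials x y ! j)^q
      else D ([0,1,2,3,4] ! (i-1)) (conic_monomials x y ! j))" if "i<6" "j<6" for i j
    unfolding frob_conic_matrix_def using that by simp
  define w0 where "w0 = w $ 0"
  define w1 where "w1 = w $ 1"
  define w2 where "w2 = w $ 2"
  define w3 where "w3 = w $ 3"
  define w4 where "w4 = w $ 4"
  define w5 where "w5 = w $ 5"
  have R0: "w0 + x^q * w1 + y^q * w2 + (x^2)^q * w3 + (x*y)^q * w4 + (y^2)^q * w5 = 0"
    using row[of 0] unfolding sum6 w0_def w1_def w2_def w3_def w4_def w5_def
    by (simp del: One_nat_def add: frob_conic_matrix_def conic_monomials_def)
  have R1: "w0 + x * w1 + y * w2 + x^2 * w3 + (x*y) * w4 + y^2 * w5 = 0"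
    using row[of 1] unfolding sum6 w0_def w1_def w2_def w3_def w4_def w5_def
    by (simp del: One_nat_def add: frob_conic_matrix_def conic_monomials_def D0)
  have R2: "w1 + (- (c1 * f ^ 2)) * w2 + (2 * x) * w3 + c0 * w4 + (- (2 * c1 * f^2 * y)) * w5 = 0"
    using row[of 2] unfolding sum6 w0_def w1_def w2_def w3_def w4_def w5_def
    by (simp del: One_nat_def add: frob_conic_matrix_def conic_monomials_def D1k D1x D1y Dx2 Dxy Dy2)
  have R3: "(c1 * f^3) * w2 + w3 + (c1 * (2 * f^3 * y + c1 * f^4)) * w5 = 0"
    using row[of 3] unfolding sum6 w0_def w1_def w2_def w3_def w4_def w5_def
    by (simp del: One_nat_def add: frob_conic_matrix_def conic_monomials_def D1k Dxk Dy Dx2 Dxy Dy2)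
  have R4: "(- (c1 * f^4)) * w2 + (- (2 * c1 * f^4 * y) - 2 * c1^2 * f^5) * w5 = 0"
    using row[of 4] unfolding sum6 w0_def w1_def w2_def w3_def w4_def w5_def
    by (simp del: One_nat_def add: frob_conic_matrix_def conic_monomials_def D1k Dxk Dy Dx2 Dxy Dy2)
  have R5: "(c1 * f^5) * w2 + (2 * c1 * f^5 * y + 3 * c1^2 * f^6) * w5 = 0"
    using row[of 5] unfolding sum6 w0_def w1_def w2_def w3_def w4_def w5_def
    by (simp del: One_nat_def add: frob_conic_matrix_def conic_monomials_def D1k Dxk Dy Dx2 Dxy Dy2)
  have "c1^2 * f^6 * w5 = f * ((- (c1 * f^4)) * w2 + (- (2 * c1 * f^4 * y) - 2 * c1^2 * f^5) * w5)
      + ((c1 * f^5) * w2 + (2 * c1 * f^5 * y + 3 * c1^2 * f^6) * w5)"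
    by (simp add: algebra_simps eval_nat_numeral)
  then have "c1^2 * f^6 * w5 = 0" using R4 R5 by simp
  then have z5: "w5 = 0" using c1nz f0 by simp
  then have z2: "w2 = 0" using R5 c1nz f0 by simp
  have z3: "w3 = 0" using R3 z2 z5 by simp
  have z1: "w1 = - (c0 * w4)" using R2 z2 z3 z5 by (simp add: eq_neg_iff_add_eq_0)
  have z0: "w0 = - (c1 * w4)" using R1 z1 z2 z3 z5 unfolding xy by (simp add: algebra_simps eq_neg_iff_add_eq_0)
  have "w4 * dd = 0" using R0 z0 z1 z2 z3 z5 unfolding dd_def
    by (simp add: power_mult_distrib algebra_simps)
  then have z4: "w4 = 0" using dd_nz by simp
  have "w = 0\<^sub>v 6"
  proof (rule eq_vecI)
    show "dim_vec w = dim_vec (0\<^sub>v 6)" using w(1) by simp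
    fix i assume "i < dim_vec (0\<^sub>v 6)"
    then have "i < 6" by simp
    then have "i = 0 \<or> i = 1 \<or> i = 2 \<or> i = 3 \<or> i = 4 \<or> i = 5" by auto
    then show "w $ i = 0\<^sub>v 6 $ i" using \<open>i < 6\<close> z0 z1 z2 z3 z4 z5
      unfolding w0_def w1_def w2_def w3_def w4_def w5_def by auto
  qed
  then show False using w(2) by simp
qed

end


lemma lex_min:
  assumes "length \<mu> = 5" and "sorted_wrt (<) \<mu>"
  shows "lex_le [0,1,2,3,4] \<mu>"
proof -
  obtain a0 a1 a2 a3 a4 where mu: "\<mu> = [a0,a1,a2,a3,a4]"
    using assms(1) by (auto simp: length_Suc_conv eval_nat_numeral)
  have "a0 < a1" "a1 < a2" "a2 < a3" "a3 < a4" using assms(2) unfolding mu by auto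
  then show ?thesis unfolding lex_le_def mu by (auto simp: lexord_cons_cons)
qed

theorem proposition3p14:
  fixes p h q n m :: nat
    and a b x y :: "'k::field"
    and D :: "nat \<Rightarrow> 'k \<Rightarrow> 'k"
  assumes "prime p" and "p > 5" and "h \<ge> 1" and "q = p ^ h"
    and "CHAR('k) = p"
    and "a ^ q = a" and "a \<noteq> 0" and "b ^ q = b" and "b \<noteq> 0"
    and "m > 2" and "n \<ge> m"
    and "a * x ^ n + b * y ^ m = 1"
    and "hasse_derivation q D x"
    and "p dvd (n + 1)" and "p dvd (m - 1)"
  shows "frobenius_classical_conics q D x y"
proof -
  interpret fsetup p h q n m a b x y D
    unfolding fsetup_def using assms by blast
  show ?thesis
    unfolding frobenius_classical_conics_def frob_conic_order_seq_def admissible_conic_seq_def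
    using det_nz lex_min by auto
qed

end
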